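(* Let $\mathcal S$ be a finite set, let $\kappa$ be a real symmetric $\mathcal S\times\mathcal S$ matrix with nonnegative entries, and let $\mu,c\in(0,\infty)^{\mathcal S}$ with $c_i<\mu_i$ for all $i$. Assume $D_c^{-1}-\kappa$ is positive definite, and set $\Phi=(D_c^{-1}-\kappa)^{-1}$, \[ A_0=(I-\kappa D_c)\,D_{\mu-c}^{-1}\,(I-D_\mu\kappa),\qquad A=\tfrac12(A_0+A_0^T). \] Assume $|c|-\tfrac12\langle c,\kappa c\rangle>0$ and that the matrix $\Phi-\frac{cc^T}{|c|-\frac12\langle c,\kappa c\rangle}$ is positive definite, and let \[ B=\Bigl(\Phi-\frac{cc^T}{|c|-\frac12\langle c,\kappa c\rangle}\Bigr)^{-1}. \] Then $A+B$ is positive definite.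
   Context: For a vector $x\in\mathbb R^{\mathcal S}$, $D_x$ denotes the diagonal matrix with diagonal entries $x_i$; $|c|=\sum_{i\in\mathcal S}c_i$ is the $\ell_1$-norm; $\langle\cdot,\cdot\rangle$ is the Euclidean inner product; $I$ is the identity matrix. *)

theory Defs
  imports "HOL-Analysis.Analysis"
begin

definition diag_mat :: "real ^ 'n \<Rightarrow> real ^ 'n ^ 'n" where
  "diag_mat x = (\<chi> i j. if i = j then x $ i else 0)"

definition pos_def_mat :: "real ^ 'n ^ 'n \<Rightarrow> bool" where
  "pos_def_mat M \<longleftrightarrow> transpose M = M \<and> (\<forall>x. x \<noteq> 0 \<longrightarrow> x \<bullet> (M *v x) > 0)"

text \<open>l1-norm of a vector (sum of entries; entries here are positive).\<close>
definition l1 :: "real ^ 'n \<Rightarrow> real" where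
  "l1 c = (\<Sum>i\<in>UNIV. \<bar>c $ i\<bar>)"

definition outer :: "real ^ 'n \<Rightarrow> real ^ 'n \<Rightarrow> real ^ 'n ^ 'n" where
  "outer u v = (\<chi> i j. u $ i * v $ j)"

end

theory Submission
  imports Defs
begin

lemma minv_props:
  fixes A :: "real^'n^'n"
  assumes "invertible A"
  shows "A ** matrix_inv A = mat 1" "matrix_inv A ** A = mat 1"
proof -
  have "\<exists>A'. A ** A' = mat 1 \<and> A' ** A = mat 1" using assms unfolding invertible_def by blast
  then have "A ** matrix_inv A = mat 1 \<and> matrix_inv A ** A = mat 1"
    unfolding matrix_inv_def by (rule someI_ex)
  then show "A ** matrix_inv A = mat 1" "matrix_inv A ** A = mat 1" by auto
qed

lemma minv_unique:
  fixes A B :: "real^'n^'n"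
  assumes "A ** B = mat 1"
  shows "matrix_inv A = B"
proof -
  have BA: "B ** A = mat 1" using assms matrix_left_right_inverse by blast
  have inv: "invertible A" using assms BA unfolding invertible_def by blast
  have "matrix_inv A = matrix_inv A ** (A ** B)" using assms by simp
  also have "\<dots> = (matrix_inv A ** A) ** B" by (simp add: matrix_mul_assoc)
  also have "\<dots> = B" using minv_props(2)[OF inv] by simp
  finally show ?thesis .
qed

lemma diag_mult_vec: "diag_mat d *v x = (\<chi> i. d $ i * x $ i)"
proof -
  have e: "\<And>i j. (if i = j then d $ i else 0) * x $ j = (if j = i then d $ i * x $ i else 0)" by auto
  show ?thesis unfolding diag_mat_def matrix_vector_mult_def by (simp add: vec_eq_iff e)
qed

lemma diag_mult_diag: "diag_mat d ** diag_mat e = diag_mat (\<chi> i. d $ i * e $ i)"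
proof -
  have e: "\<And>i j k. (if i = k then d $ i else 0) * (if k = j then e $ k else 0) = (if k = i then (if i = j then d $ i * e $ i else 0) else 0)" by auto
  show ?thesis unfolding diag_mat_def matrix_matrix_mult_def by (simp add: vec_eq_iff e)
qed

lemma mat1_diag: "mat 1 = diag_mat (\<chi> i. (1::real))"
  unfolding diag_mat_def mat_def by (simp add: vec_eq_iff)

lemma diag_inv:
  assumes "\<And>i. d $ i \<noteq> (0::real)"
  shows "matrix_inv (diag_mat d) = diag_mat (\<chi> i. 1 / d $ i)"
  apply (rule minv_unique)
  using assms by (simp add: diag_mult_diag mat1_diag)

lemma pd_invertible:
  fixes N :: "real^'n^'n"
  assumes "pos_def_mat N"
  shows "invertible N"
proof -
  have "\<forall>x. N *v x = 0 \<longrightarrow> x = 0"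
    using assms unfolding pos_def_mat_def by (metis inner_zero_right less_irrefl)
  then show ?thesis using matrix_left_invertible_ker invertible_left_inverse by blast
qed

lemma inv_sym:
  fixes N :: "real^'n^'n"
  assumes "invertible N" "transpose N = N"
  shows "transpose (matrix_inv N) = matrix_inv N"
proof -
  let ?B = "matrix_inv N"
  have "transpose ?B ** N = transpose (N ** ?B)"
    by (simp add: matrix_transpose_mul assms(2))
  also have "\<dots> = mat 1" using minv_props(1)[OF assms(1)] by simp
  finally have 1: "transpose ?B ** N = mat 1" .
  have "transpose ?B = transpose ?B ** (N ** ?B)" using minv_props(1)[OF assms(1)] by simp
  also have "\<dots> = (transpose ?B ** N) ** ?B" by (simp add: matrix_mul_assoc)
  also have "\<dots> = ?B" using 1 by simp
  finally show ?thesis .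
qed

lemma sym_inner:
  fixes N :: "real^'n^'n"
  assumes "transpose N = N"
  shows "x \<bullet> (N *v y) = (N *v x) \<bullet> y"
  by (metis assms dot_lmul_matrix inner_commute transpose_matrix_vector)

lemma transpose_inner:
  fixes N :: "real^'n^'n"
  shows "x \<bullet> (transpose N *v x) = x \<bullet> (N *v x)"
  by (metis dot_lmul_matrix inner_commute transpose_matrix_vector vector_transpose_matrix transpose_transpose)

lemma vmul_inner:
  fixes N :: "real^'n^'n"
  shows "x \<bullet> (x v* N) = x \<bullet> (N *v x)"
  by (metis dot_lmul_matrix inner_commute)

lemma transpose_add: "transpose (A + B :: real^'n^'n) = transpose A + transpose B"
  by (simp add: transpose_def vec_eq_iff)

lemma outer_mult: "outer c c *v y = (c \<bullet> y) *\<^sub>R c"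
  unfolding outer_def matrix_vector_mult_def inner_vec_def
  by (simp add: vec_eq_iff sum_distrib_left sum_distrib_right mult_ac)

lemma alg: fixes a m X Y :: real assumes "a > 0" "m - a > 0"
  shows "X * ((X - m * (X / a - Y)) / (m - a)) - (X / a - Y) * (a * ((X - m * (X / a - Y)) / (m - a)))
     = a * m * Y^2 / (m - a) - X * Y"
proof -
  define W where "W = (X - m * (X / a - Y)) / (m - a)"
  have a0: "a \<noteq> 0" and d0: "m - a \<noteq> 0" using assms by auto
  have 1: "X * W - (X / a - Y) * (a * W) = a * Y * W" using a0 by (simp add: field_simps)
  have 2: "a * (X - m * (X / a - Y)) = a * X - m * X + a * m * Y" using a0 by (simp add: field_simps)
  have "a * Y * W = Y * (a * (X - m * (X / a - Y))) / (m - a)" unfolding W_def by simp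
  also have "\<dots> = Y * (a * m * Y - X * (m - a)) / (m - a)" unfolding 2 by (simp add: algebra_simps)
  also have "\<dots> = a * m * Y^2 / (m - a) - (X * Y) * (m - a) / (m - a)"
    by (simp add: diff_divide_distrib right_diff_distrib power2_eq_square mult_ac)
  also have "(X * Y) * (m - a) / (m - a) = X * Y" using d0 by simp
  finally show ?thesis using 1 unfolding W_def by simp
qed

theorem mainTheorem4:
  fixes \<kappa> :: "real ^ 'n ^ 'n" and \<mu> c :: "real ^ 'n"
  assumes sym: "transpose \<kappa> = \<kappa>"
    and nonneg: "\<And>i j. \<kappa> $ i $ j \<ge> 0"
    and cpos: "\<And>i. c $ i > 0"
    and mupos: "\<And>i. \<mu> $ i > 0"
    and cmu: "\<And>i. c $ i < \<mu> $ i"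
    and pd1: "pos_def_mat (matrix_inv (diag_mat c) - \<kappa>)"
    and den: "l1 c - (1/2) * (c \<bullet> (\<kappa> *v c)) > 0"
    and pd2: "pos_def_mat (matrix_inv (matrix_inv (diag_mat c) - \<kappa>)
                 - (1 / (l1 c - (1/2) * (c \<bullet> (\<kappa> *v c)))) *\<^sub>R outer c c)"
  shows "let \<Phi> = matrix_inv (matrix_inv (diag_mat c) - \<kappa>);
             A0 = (mat 1 - \<kappa> ** diag_mat c) ** matrix_inv (diag_mat (\<mu> - c))
                    ** (mat 1 - diag_mat \<mu> ** \<kappa>);
             A = (1/2) *\<^sub>R (A0 + transpose A0);
             B = matrix_inv (\<Phi> - (1 / (l1 c - (1/2) * (c \<bullet> (\<kappa> *v c)))) *\<^sub>R outer c c)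
         in pos_def_mat (A + B)"
proof -
  define t where "t = 1 / (l1 c - (1/2) * (c \<bullet> (\<kappa> *v c)))"
  have tpos: "t > 0" using den unfolding t_def by simp
  define Dinv where "Dinv = matrix_inv (diag_mat c)"
  define M where "M = Dinv - \<kappa>"
  define \<Phi> where "\<Phi> = matrix_inv M"
  define N where "N = \<Phi> - t *\<^sub>R outer c c"
  define B where "B = matrix_inv N"
  define A0 where "A0 = (mat 1 - \<kappa> ** diag_mat c) ** matrix_inv (diag_mat (\<mu> - c))
                    ** (mat 1 - diag_mat \<mu> ** \<kappa>)"
  define A where "A = (1/2) *\<^sub>R (A0 + transpose A0)"
  have Dinv: "Dinv = diag_mat (\<chi> i. 1 / c $ i)"
    unfolding Dinv_def using cpos by (intro diag_inv) (metis less_irrefl)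
  have Einv: "matrix_inv (diag_mat (\<mu> - c)) = diag_mat (\<chi> i. 1 / (\<mu> $ i - c $ i))"
  proof -
    have "matrix_inv (diag_mat (\<mu> - c)) = diag_mat (\<chi> i. 1 / ((\<mu> - c) $ i))"
      by (rule diag_inv) (use cmu in \<open>simp, metis less_irrefl\<close>)
    then show ?thesis by simp
  qed
  have pdM: "pos_def_mat M" using pd1 unfolding M_def Dinv_def .
  have pdN: "pos_def_mat N" using pd2 unfolding N_def \<Phi>_def M_def Dinv_def t_def .
  have invM: "invertible M" by (rule pd_invertible[OF pdM])
  have invN: "invertible N" by (rule pd_invertible[OF pdN])
  have symM: "transpose M = M" using pdM unfolding pos_def_mat_def by simp
  have symN: "transpose N = N" using pdN unfolding pos_def_mat_def by simp
  have symB: "transpose B = B" unfolding B_def by (rule inv_sym[OF invN symN])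
  have symA: "transpose A = A" unfolding A_def
    by (simp add: transpose_scalar transpose_add add.commute)
  have PhiM: "\<Phi> ** M = mat 1" unfolding \<Phi>_def by (rule minv_props(2)[OF invM])
  have NB: "N ** B = mat 1" unfolding B_def by (rule minv_props(1)[OF invN])
  show ?thesis
    unfolding Let_def
    unfolding t_def[symmetric] Dinv_def[symmetric] M_def[symmetric] \<Phi>_def[symmetric]
      N_def[symmetric] B_def[symmetric] A0_def[symmetric] A_def[symmetric]
    unfolding pos_def_mat_def
  proof (intro conjI allI impI)
    show "transpose (A + B) = A + B" by (simp add: transpose_add symA symB)
    fix x :: "real^'n" assume x0: "x \<noteq> 0"
    define y where "y = M *v x"
    have xy: "x = \<Phi> *v y" unfolding y_def using PhiM by (simp add: matrix_vector_mul_assoc)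
    have y0: "y \<noteq> 0" using x0 xy by auto
    have Ax: "x \<bullet> (A *v x) = x \<bullet> (A0 *v x)"
      unfolding A_def by (simp add: scaleR_matrix_vector_assoc[symmetric]
          matrix_vector_mult_add_rdistrib inner_add_right vmul_inner)
    have Kx: "\<kappa> *v x = (\<chi> i. x $ i / c $ i - y $ i)"
    proof -
      have "y = Dinv *v x - \<kappa> *v x" unfolding y_def M_def by (simp add: matrix_vector_mult_diff_rdistrib)
      then have "\<kappa> *v x = Dinv *v x - y" by simp
      then show ?thesis by (simp add: Dinv diag_mult_vec vec_eq_iff)
    qed
    define w where "w = (\<chi> i. (x $ i - \<mu> $ i * (x $ i / c $ i - y $ i)) / (\<mu> $ i - c $ i))"
    have A0x: "A0 *v x = w - \<kappa> *v (diag_mat c *v w)"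
    proof -
      have "A0 *v x = (mat 1 - \<kappa> ** diag_mat c) *v (matrix_inv (diag_mat (\<mu> - c))
                    *v ((mat 1 - diag_mat \<mu> ** \<kappa>) *v x))"
        unfolding A0_def by (simp add: matrix_vector_mul_assoc matrix_mul_assoc)
      also have "matrix_inv (diag_mat (\<mu> - c)) *v ((mat 1 - diag_mat \<mu> ** \<kappa>) *v x) = w"
        unfolding Einv w_def
        by (simp add: matrix_vector_mult_diff_rdistrib matrix_vector_mul_assoc[symmetric]
            Kx diag_mult_vec vec_eq_iff)
      finally show ?thesis
        by (simp add: matrix_vector_mult_diff_rdistrib matrix_vector_mul_assoc[symmetric])
    qed
    have QA: "x \<bullet> (A *v x) = (\<Sum>i\<in>UNIV. c $ i * \<mu> $ i * (y $ i)^2 / (\<mu> $ i - c $ i)) - x \<bullet> y"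
    proof -
      have "x \<bullet> (A *v x) = x \<bullet> w - (\<kappa> *v x) \<bullet> (diag_mat c *v w)"
        unfolding Ax A0x inner_diff_right sym_inner[OF sym] ..
      also have "\<dots> = (\<Sum>i\<in>UNIV. x $ i * w $ i - (x $ i / c $ i - y $ i) * (c $ i * w $ i))"
        unfolding Kx diag_mult_vec inner_vec_def by (simp add: sum_subtractf)
      also have "\<dots> = (\<Sum>i\<in>UNIV. c $ i * \<mu> $ i * (y $ i)^2 / (\<mu> $ i - c $ i) - x $ i * y $ i)"
      proof (rule sum.cong[OF refl])
        fix i
        have ci: "c $ i > 0" by (rule cpos)
        have mi: "\<mu> $ i - c $ i > 0" using cmu[of i] by simp
        show "x $ i * w $ i - (x $ i / c $ i - y $ i) * (c $ i * w $ i) =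
              c $ i * \<mu> $ i * (y $ i)^2 / (\<mu> $ i - c $ i) - x $ i * y $ i"
          unfolding w_def using alg[OF ci mi] by simp
      qed
      also have "\<dots> = (\<Sum>i\<in>UNIV. c $ i * \<mu> $ i * (y $ i)^2 / (\<mu> $ i - c $ i)) - x \<bullet> y"
        unfolding inner_vec_def by (simp add: sum_subtractf)
      finally show ?thesis .
    qed
    have Spos: "(\<Sum>i\<in>UNIV. c $ i * \<mu> $ i * (y $ i)^2 / (\<mu> $ i - c $ i)) > 0"
    proof -
      obtain k where k: "y $ k \<noteq> 0" using y0 by (metis vec_eq_iff zero_index)
      have nn: "\<And>i. c $ i * \<mu> $ i * (y $ i)^2 / (\<mu> $ i - c $ i) \<ge> 0"
        using cpos mupos cmu by (smt (verit) divide_nonneg_pos mult_nonneg_nonneg zero_le_power2)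
      have "c $ k * \<mu> $ k * (y $ k)^2 / (\<mu> $ k - c $ k) > 0"
        using cpos[of k] mupos[of k] cmu[of k] k by simp
      then show ?thesis using nn by (intro sum_pos2[of UNIV k]) auto
    qed
    define w' where "w' = (t * (c \<bullet> y)) *\<^sub>R c"
    define u where "u = B *v w'"
    have BN: "B ** N = mat 1" using NB matrix_left_right_inverse by blast
    have Nu: "N *v u = w'" unfolding u_def using NB by (simp add: matrix_vector_mul_assoc)
    have xN: "x = N *v y + w'"
      unfolding N_def w'_def xy by (simp add: matrix_vector_mult_diff_rdistrib outer_mult
          matrix_vector_mult_scaleR[symmetric] scaleR_matrix_vector_assoc[symmetric])
    have Bx: "B *v x = y + u"
      unfolding u_def xN matrix_vector_right_distrib matrix_vector_mul_assoc BN by simp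
    have QB: "x \<bullet> (B *v x) = x \<bullet> y + t * (c \<bullet> y)^2 + u \<bullet> (N *v u)"
    proof -
      have "x \<bullet> (B *v x) = x \<bullet> y + (N *v y) \<bullet> u + w' \<bullet> u"
        unfolding Bx inner_add_right by (subst (2) xN) (simp add: inner_add_left)
      also have "(N *v y) \<bullet> u = y \<bullet> w'" using sym_inner[OF symN, of y u] Nu by simp
      also have "y \<bullet> w' = t * (c \<bullet> y)^2" unfolding w'_def by (simp add: power2_eq_square inner_commute)
      also have "w' \<bullet> u = u \<bullet> (N *v u)" using Nu by (simp add: inner_commute)
      finally show ?thesis .
    qed
    have un: "u \<bullet> (N *v u) \<ge> 0"
      using pdN unfolding pos_def_mat_def by (cases "u = 0") (auto intro: less_imp_le)
    have "x \<bullet> ((A + B) *v x) = x \<bullet> (A *v x) + x \<bullet> (B *v x)"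
      by (simp add: matrix_vector_mult_add_rdistrib inner_add_right)
    also have "\<dots> > 0" unfolding QA QB using Spos un tpos
      by (smt (verit) mult_nonneg_nonneg zero_le_power2)
    finally show "x \<bullet> ((A + B) *v x) > 0" .
  qed
qed

end
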